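(* Let $S\in\mathbb{R}^{2n\times 2n}$ be a symplectic matrix, i.e. $S^TJS=J$. Then there exists a P-SympNet $\Phi_h$ of degree $d\ge 2$ with $k$ layers such that $Sx=\Phi_h(x)$ for all $x\in\mathbb{R}^{2n}$. Moreover: (i) for arbitrary symplectic $S$ one can take $k\le 5n$; (ii) if $S=\begin{pmatrix}A&B\\ C&D\end{pmatrix}$ with $A,B,C,D\in\mathbb{R}^{n\times n}$ and $\det A\neq 0$, one can take $k\le 4n$; (iii) if $S=e^{hJM}$ with $M=M^T\in\mathbb{R}^{2n\times 2n}$ and $h>0$ sufficiently small, then there is such a P-SympNet with time step $h$ and $k\le 2n$.
   Context: $x=(p,q)\in\mathbb{R}^{2n}$, $J=\begin{pmatrix}0&-I\\ I&0\end{pmatrix}$. A P-SympNet of degree $d$ with $k$ layers and time step $h$ is a composition $\phi^{H_k}_h\circ\cdots\circ\phi^{H_1}_h$ where $H_i(x)=\alpha_i(w_i^Tx)$ with $w_i\in\mathbb{R}^{2n}$ and $\alpha_i(z)=\sum_{j=1}^d a_{ij}z^j$ a real univariate polynomial; each layer is the exact flow of $\dot x=J\nabla H_i(x)$, given explicitly by $\phi^{H_i}_h(x)=x+h\,\alpha_i'(w_i^Tx)\,Jw_i$. *)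

theory Defs
  imports "HOL-Analysis.Analysis" "HOL-Computational_Algebra.Polynomial"
begin

text \<open>Phase space R^{2n} is modelled as real ^ ('n + 'n): index Inl i is q_i, Inr i is p_i,
  where n = CARD('n).\<close>

definition Jmat :: "real ^ ('n::finite + 'n) ^ ('n + 'n)" where
  "Jmat = (\<chi> a b. case (a, b) of
       (Inl i, Inr j) \<Rightarrow> (if i = j then -1 else 0)
     | (Inr i, Inl j) \<Rightarrow> (if i = j then 1 else 0)
     | _ \<Rightarrow> 0)"

definition symplectic :: "real ^ ('n::finite + 'n) ^ ('n + 'n) \<Rightarrow> bool" where
  "symplectic S \<longleftrightarrow> transpose S ** Jmat ** S = Jmat"

definition block_A :: "real ^ ('n::finite + 'n) ^ ('n + 'n) \<Rightarrow> real ^ 'n ^ 'n" where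
  "block_A S = (\<chi> i j. S $ Inl i $ Inl j)"

primrec mat_pow :: "'a::{semiring_1} ^ 'm::finite ^ 'm \<Rightarrow> nat \<Rightarrow> 'a ^ 'm ^ 'm" where
  "mat_pow A 0 = mat 1"
| "mat_pow A (Suc k) = A ** mat_pow A k"

definition mat_exp :: "real ^ 'm::finite ^ 'm \<Rightarrow> real ^ 'm ^ 'm" where
  "mat_exp A = (\<Sum>k. (1 / fact k) *\<^sub>R mat_pow A k)"

text \<open>A P-SympNet layer with H(x) = alpha(w^T x): phi_h(x) = x + h alpha'(w^T x) J w.
  alpha is a real polynomial without constant term of degree at most d.\<close>
definition psymp_layer :: "real \<Rightarrow> (real ^ ('n::finite + 'n)) \<times> real poly
     \<Rightarrow> real ^ ('n + 'n) \<Rightarrow> real ^ ('n + 'n)" where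
  "psymp_layer h l x = x + (h * poly (pderiv (snd l)) (fst l \<bullet> x)) *\<^sub>R (Jmat *v fst l)"

definition valid_psymp :: "nat \<Rightarrow> ((real ^ ('n::finite + 'n)) \<times> real poly) list \<Rightarrow> bool" where
  "valid_psymp d ls \<longleftrightarrow> (\<forall>l \<in> set ls. degree (snd l) \<le> d \<and> coeff (snd l) 0 = 0)"

text \<open>Network [l_1,...,l_k] = phi^{H_k}_h o ... o phi^{H_1}_h (first layer applied first).\<close>
definition psympnet :: "real \<Rightarrow> ((real ^ ('n::finite + 'n)) \<times> real poly) list
     \<Rightarrow> real ^ ('n + 'n) \<Rightarrow> real ^ ('n + 'n)" where
  "psympnet h ls x = fold (psymp_layer h) ls x"

end

theory Submission
  imports Defs
begin

lemma UNIV_sum_type: "(UNIV :: ('a::finite + 'a) set) = UNIV <+> UNIV"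
  by (simp add: UNIV_Plus_UNIV)

lemma sum_UNIV_Plus: "(\<Sum>a\<in>(UNIV::('a::finite + 'a) set). g a) = (\<Sum>i\<in>UNIV. g (Inl i)) + (\<Sum>i\<in>UNIV. g (Inr i))"
  by (subst UNIV_sum_type, subst sum.Plus) (simp_all add: o_def)

lemma sum_delta_mult: "(\<Sum>j\<in>UNIV. (if i = j then c else 0) * g j) = c * g (i::'a::finite)" for c :: real
proof -
  have "(\<lambda>j. (if i = j then c else 0) * g j) = (\<lambda>j. if i = j then c * g j else 0)" by (rule ext) simp
  then show ?thesis by (subst \<open>_ = _\<close>) (simp add: sum.delta)
qed

lemma J_Inl [simp]: "(Jmat *v x) $ Inl i = - x $ Inr i"
  unfolding matrix_vector_mult_def Jmat_def
  by (simp add: sum_UNIV_Plus sum_delta_mult)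

lemma J_Inr [simp]: "(Jmat *v x) $ Inr i = x $ Inl i"
  unfolding matrix_vector_mult_def Jmat_def
  by (simp add: sum_UNIV_Plus sum_delta_mult)

lemma JJ: "Jmat *v (Jmat *v x) = - x"
proof -
  have "\<And>a. (Jmat *v (Jmat *v x)) $ a = (- x) $ a"
    by (case_tac a) simp_all
  then show ?thesis by (simp add: vec_eq_iff)
qed

definition omega :: "real^('n::finite+'n) \<Rightarrow> real^('n+'n) \<Rightarrow> real" where
  "omega p q = p \<bullet> (Jmat *v q)"

lemma omega_expand:
  "omega p q = (\<Sum>i\<in>UNIV. p $ Inr i * q $ Inl i - p $ Inl i * q $ Inr i)"
  unfolding omega_def inner_vec_def
  by (simp add: sum_UNIV_Plus sum_subtractf sum_negf)

lemma omega_antisym: "omega p q = - omega q p"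
  unfolding omega_expand by (simp add: sum_negf[symmetric] algebra_simps)

lemma omega_self [simp]: "omega p p = 0"
  using omega_antisym[of p p] by simp

lemma omega_add_left: "omega (p + p') q = omega p q + omega p' q"
  unfolding omega_def by (simp add: inner_add_left)
lemma omega_add_right: "omega p (q + q') = omega p q + omega p q'"
  unfolding omega_def by (simp add: inner_add_right matrix_vector_right_distrib)
lemma omega_scale_left: "omega (c *\<^sub>R p) q = c * omega p q"
  unfolding omega_def by simp
lemma omega_scale_right: "omega p (c *\<^sub>R q) = c * omega p q"
  unfolding omega_def by (simp add: matrix_vector_mult_scaleR)
lemma omega_diff_left: "omega (p - p') q = omega p q - omega p' q"
  unfolding omega_def by (simp add: inner_diff_left)
lemma omega_diff_right: "omega p (q - q') = omega p q - omega p q'"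
  unfolding omega_def by (simp add: inner_diff_right matrix_vector_mult_diff_distrib)
lemma omega_neg_left: "omega (- p) q = - omega p q"
  unfolding omega_def by simp
lemma omega_neg_right: "omega p (- q) = - omega p q"
  using omega_diff_right[of p 0 q] by (simp add: omega_def)
lemma omega_zero [simp]: "omega 0 q = 0" "omega p 0 = 0"
  unfolding omega_def by simp_all

lemmas omega_simps = omega_add_left omega_add_right omega_scale_left omega_scale_right
  omega_diff_left omega_diff_right omega_neg_left omega_neg_right

lemma omega_nondeg:
  assumes "\<And>q. omega p q = 0" shows "p = 0"
proof -
  have "\<And>a. p $ a = 0"
  proof -
    fix a show "p $ a = 0"
    proof (cases a)
      case (Inl i)
      have "omega p (axis (Inr i) 1) = 0" by (rule assms)
      then show ?thesis unfolding omega_def inner_vec_def using Inl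
        by (simp add: sum_UNIV_Plus axis_def if_distrib cong: if_cong)
    next
      case (Inr i)
      have "omega p (axis (Inl i) 1) = 0" by (rule assms)
      then show ?thesis unfolding omega_def inner_vec_def using Inr
        by (simp add: sum_UNIV_Plus axis_def if_distrib cong: if_cong)
    qed
  qed
  then show ?thesis by (simp add: vec_eq_iff)
qed


type_synonym 'n pv = "real^('n+'n)"

definition tv :: "'n::finite pv \<Rightarrow> real \<Rightarrow> 'n pv \<Rightarrow> 'n pv" where
  "tv u t x = x + (t * omega u x) *\<^sub>R u"

definition tnet :: "('n::finite pv \<times> real) list \<Rightarrow> 'n pv \<Rightarrow> 'n pv" where
  "tnet L x = fold (\<lambda>(u,t). tv u t) L x"

lemma tnet_snoc: "tnet (L @ [(u,t)]) x = tv u t (tnet L x)"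
  unfolding tnet_def by simp
lemma tnet_cons: "tnet ((u,t) # L) x = tnet L (tv u t x)"
  unfolding tnet_def by simp
lemma tnet_Nil: "tnet [] x = x"
  unfolding tnet_def by simp

definition preserves :: "('n::finite pv \<Rightarrow> 'n pv) \<Rightarrow> bool" where
  "preserves f \<longleftrightarrow> (\<forall>x y. omega (f x) (f y) = omega x y)"

definition Fix :: "('n::finite pv \<Rightarrow> 'n pv) \<Rightarrow> 'n pv set" where
  "Fix f = {x. f x = x}"

lemma tv_inv: "tv u t (tv u (-t) z) = z"
  unfolding tv_def by (simp add: omega_simps)

lemma linear_tv: "linear (tv u t)"
  by (rule linearI) (simp_all add: tv_def omega_simps algebra_simps)

lemma preserves_tv: "preserves (tv u t)"
  unfolding preserves_def tv_def
proof (intro allI)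
  fix x y
  have "omega u x = - omega x u" by (rule omega_antisym)
  then show "omega (x + (t * omega u x) *\<^sub>R u) (y + (t * omega u y) *\<^sub>R u) = omega x y"
    by (simp add: omega_simps algebra_simps)
qed

lemma preserves_comp: "preserves f \<Longrightarrow> preserves g \<Longrightarrow> preserves (\<lambda>x. f (g x))"
  unfolding preserves_def by simp

lemma preserves_inj: assumes "preserves f" "linear f" shows "inj f"
proof (rule injI)
  fix x y assume e: "f x = f y"
  have "\<And>q. omega (x - y) q = 0"
  proof -
    fix q
    have "omega (x - y) q = omega (f (x - y)) (f q)" using assms(1) unfolding preserves_def by simp
    also have "\<dots> = 0" using e by (simp add: linear_diff[OF assms(2)])
    finally show "omega (x - y) q = 0" .
  qed
  then show "x = y" using omega_nondeg[of "x - y"] by simp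
qed

lemma lin_surj: assumes "linear (f :: 'n::finite pv \<Rightarrow> 'n pv)" "inj f" shows "surj f"
  using assms linear_injective_imp_surjective by blast

lemma lin_id: "linear (\<lambda>x::'n::finite pv. x)"
  by (rule linearI) auto

lemma subspace_Fix: assumes "linear f" shows "subspace (Fix f)"
  unfolding subspace_def Fix_def using assms
  by (simp add: linear_0 linear_add linear_scale)

lemma dim_Fix_less:
  assumes "linear f" "linear g" "Fix f \<subseteq> Fix g" "x \<in> Fix g" "x \<notin> Fix f"
  shows "dim (Fix f) < dim (Fix g)"
proof -
  have sp: "span (Fix f) = Fix f" using subspace_Fix[OF assms(1)] by (simp add: span_eq_iff)
  have "dim (insert x (Fix f)) = dim (Fix f) + 1"
    using assms(5) by (simp add: dim_insert sp)
  moreover have "dim (insert x (Fix f)) \<le> dim (Fix g)"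
    using assms(3,4) by (intro dim_subset) auto
  ultimately show ?thesis by simp
qed

lemma Fix_UNIV:
  assumes "linear f" "dim (Fix f) \<ge> DIM('n::finite pv)"
  shows "\<forall>x. f x = (x::'n pv)"
proof -
  have "dim (Fix f) = DIM('n pv)" using assms(2) dim_subset_UNIV[of "Fix f"] by simp
  then have "span (Fix f) = UNIV" by (metis dim_eq_full)
  then have "Fix f = UNIV" using subspace_Fix[OF assms(1)] by (metis span_eq_iff)
  then show ?thesis unfolding Fix_def by auto
qed

lemma peel:
  fixes f :: "'n::finite pv \<Rightarrow> 'n pv"
  assumes lin: "linear f" and pres: "preserves f" and nz: "omega (f x) x \<noteq> 0"
  defines "u \<equiv> f x - x" and "t \<equiv> 1 / omega (f x) x"
  defines "g \<equiv> (\<lambda>y. tv u (-t) (f y))"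
  shows "linear g" "preserves g" "\<And>y. f y = tv u t (g y)"
    "Fix f \<subseteq> Fix g" "x \<in> Fix g" "x \<notin> Fix f"
proof -
  show "linear g" unfolding g_def
    using linear_compose[OF lin linear_tv, unfolded o_def] .
  show "preserves g" unfolding g_def by (rule preserves_comp[OF preserves_tv pres])
  show "\<And>y. f y = tv u t (g y)" unfolding g_def by (simp add: tv_inv[of u t, simplified])
  show "Fix f \<subseteq> Fix g"
  proof
    fix y assume "y \<in> Fix f"
    then have fy: "f y = y" by (simp add: Fix_def)
    have "omega u y = omega (f x) (f y) - omega x y" by (simp add: u_def omega_simps fy)
    also have "\<dots> = 0" using pres by (simp add: preserves_def)
    finally show "y \<in> Fix g" by (simp add: Fix_def g_def tv_def fy)
  qed
  have "omega u (f x) = omega (f x) x"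
    using omega_antisym[of x "f x"] by (simp add: u_def omega_simps)
  then show "x \<in> Fix g" using nz by (simp add: Fix_def g_def tv_def t_def u_def)
  show "x \<notin> Fix f" using nz by (auto simp: Fix_def)
qed


lemma omega_fu_nz:
  assumes "linear f" "preserves f" "u \<noteq> 0"
  shows "\<exists>b. omega (f u) b \<noteq> 0"
proof -
  have "f u \<noteq> 0" using preserves_inj[OF assms(2,1)] assms(3) linear_0[OF assms(1)]
    by (metis injD)
  then show ?thesis using omega_nondeg by blast
qed

lemma two_lin:
  assumes "omega p1 (u::'n::finite pv) \<noteq> 0" "omega p2 q \<noteq> 0"
  shows "\<exists>x. omega p1 x \<noteq> 0 \<and> omega p2 x \<noteq> 0"
proof (cases "omega p2 u = 0")
  case False then show ?thesis using assms by blast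
next
  case True
  show ?thesis
  proof (cases "omega p1 q = 0")
    case False then show ?thesis using assms by blast
  next
    case T2: True
    show ?thesis using assms True T2 by (intro exI[of _ "u + q"]) (simp add: omega_simps)
  qed
qed

lemma decompB:
  "\<forall>f :: 'n::finite pv \<Rightarrow> 'n pv. linear f \<longrightarrow> preserves f \<longrightarrow> DIM('n pv) \<le> dim (Fix f) + k
     \<longrightarrow> (\<exists>L. length L \<le> 2 * k \<and> (\<forall>x. f x = tnet L x))"
proof (induction k)
  case 0
  show ?case
  proof (intro allI impI)
    fix f :: "'n pv \<Rightarrow> 'n pv"
    assume "linear f" "preserves f" "DIM('n pv) \<le> dim (Fix f) + 0"
    then have "\<forall>x. f x = x" using Fix_UNIV by simp
    then show "\<exists>L. length L \<le> 2 * 0 \<and> (\<forall>x. f x = tnet L x)"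
      by (intro exI[of _ "[]"]) (simp add: tnet_Nil)
  qed
next
  case (Suc k)
  have nonbad: "\<exists>L. length L \<le> 2 * k + 1 \<and> (\<forall>y. f y = tnet L y)"
    if lin: "linear f" and pres: "preserves f" and d: "DIM('n pv) \<le> dim (Fix f) + Suc k"
      and nz: "omega (f x) x \<noteq> 0" for f :: "'n pv \<Rightarrow> 'n pv" and x
  proof -
    note P = peel[OF lin pres nz]
    let ?g = "\<lambda>y. tv (f x - x) (- (1 / omega (f x) x)) (f y)"
    have "dim (Fix f) < dim (Fix ?g)" by (rule dim_Fix_less[OF lin P(1) P(4) P(5) P(6)])
    then have "DIM('n pv) \<le> dim (Fix ?g) + k" using d by simp
    then obtain L where L: "length L \<le> 2 * k" "\<forall>y. ?g y = tnet L y"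
      using Suc.IH P(1,2) by blast
    show ?thesis
    proof (intro exI[of _ "L @ [(f x - x, 1 / omega (f x) x)]"] conjI allI)
      show "length (L @ [(f x - x, 1 / omega (f x) x)]) \<le> 2 * k + 1" using L by simp
      fix y
      have "f y = tv (f x - x) (1 / omega (f x) x) (?g y)" by (rule P(3))
      also have "\<dots> = tnet (L @ [(f x - x, 1 / omega (f x) x)]) y" using L(2) by (simp add: tnet_snoc)
      finally show "f y = tnet (L @ [(f x - x, 1 / omega (f x) x)]) y" .
    qed
  qed
  show ?case
  proof (intro allI impI)
    fix f :: "'n pv \<Rightarrow> 'n pv"
    assume lin: "linear f" and pres: "preserves f" and d: "DIM('n pv) \<le> dim (Fix f) + Suc k"
    show "\<exists>L. length L \<le> 2 * Suc k \<and> (\<forall>x. f x = tnet L x)"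
    proof (cases "\<forall>x. f x = x")
      case True then show ?thesis by (intro exI[of _ "[]"]) (simp add: tnet_Nil)
    next
      case False
      then obtain z where z: "f z \<noteq> z" by blast
      show ?thesis
      proof (cases "\<exists>x. omega (f x) x \<noteq> 0")
        case True
        then obtain x where "omega (f x) x \<noteq> 0" by blast
        from nonbad[OF lin pres d this] obtain L where
          "length L \<le> 2 * k + 1" "\<forall>y. f y = tnet L y" by blast
        then show ?thesis by (intro exI[of _ L]) simp
      next
        case False
        then have bad: "\<And>x. omega (f x) x = 0" by blast
        define u where "u = f z - z"
        have u0: "u \<noteq> 0" using z by (simp add: u_def)
        define f' where "f' = (\<lambda>y. f (tv u 1 y))"
        have lin': "linear f'" unfolding f'_def
          using linear_compose[OF linear_tv lin, unfolded o_def] .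
        have pres': "preserves f'" unfolding f'_def by (rule preserves_comp[OF pres preserves_tv])
        have sub: "Fix f \<subseteq> Fix f'"
        proof
          fix y assume "y \<in> Fix f"
          then have fy: "f y = y" by (simp add: Fix_def)
          have "omega u y = omega (f z) (f y) - omega z y" by (simp add: u_def omega_simps fy)
          also have "\<dots> = 0" using pres by (simp add: preserves_def)
          finally show "y \<in> Fix f'" by (simp add: Fix_def f'_def tv_def fy)
        qed
        have "dim (Fix f) \<le> dim (Fix f')" using sub by (rule dim_subset)
        with d have d': "DIM('n pv) \<le> dim (Fix f') + Suc k" by simp
        obtain a where a: "omega u a \<noteq> 0" using omega_nondeg u0 by blast
        obtain b where b: "omega (f u) b \<noteq> 0" using omega_fu_nz[OF lin pres u0] by blast
        obtain x where x: "omega u x \<noteq> 0" "omega (f u) x \<noteq> 0" using two_lin[OF a b] by blast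
        have "omega (f' x) x = omega u x * omega (f u) x"
          unfolding f'_def tv_def using bad[of x]
          by (simp add: linear_add[OF lin] linear_scale[OF lin] omega_simps)
        then have "omega (f' x) x \<noteq> 0" using x by simp
        from nonbad[OF lin' pres' d' this] obtain L where
          L: "length L \<le> 2 * k + 1" "\<forall>y. f' y = tnet L y" by blast
        show ?thesis
        proof (intro exI[of _ "(u, -1) # L"] conjI allI)
          show "length ((u, -1) # L) \<le> 2 * Suc k" using L by simp
          fix y
          have "f y = f' (tv u (-1) y)" unfolding f'_def using tv_inv[of u 1 y] by simp
          then show "f y = tnet ((u, -1) # L) y" using L by (simp add: tnet_cons)
        qed
      qed
    qed
  qed
qed


lemma two_forms:
  fixes P1 Q1 P2 Q2 :: "'n::finite pv \<Rightarrow> 'n pv"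
  assumes l: "linear P1" "linear Q1" "linear P2" "linear Q2"
    and a: "omega (P1 a) (Q1 a) \<noteq> 0" and b: "omega (P2 b) (Q2 b) \<noteq> 0"
  shows "\<exists>w. omega (P1 w) (Q1 w) \<noteq> 0 \<and> omega (P2 w) (Q2 w) \<noteq> 0"
proof -
  have exp: "omega (P (a + s *\<^sub>R b)) (Q (a + s *\<^sub>R b)) =
      poly [:omega (P a) (Q a), omega (P a) (Q b) + omega (P b) (Q a), omega (P b) (Q b):] s"
    if "linear P" "linear Q" for P Q :: "'n pv \<Rightarrow> 'n pv" and s
    using that by (simp add: linear_add linear_scale omega_simps algebra_simps power2_eq_square)
  define p1 where "p1 = [:omega (P1 a) (Q1 a), omega (P1 a) (Q1 b) + omega (P1 b) (Q1 a), omega (P1 b) (Q1 b):]"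
  define p2 where "p2 = [:omega (P2 a) (Q2 a), omega (P2 a) (Q2 b) + omega (P2 b) (Q2 a), omega (P2 b) (Q2 b):]"
  have "p1 \<noteq> 0" using a by (simp add: p1_def)
  have "p2 \<noteq> 0" using b by (auto simp: p2_def)
  have "finite ({s. poly p1 s = 0} \<union> {s. poly p2 s = 0})"
    using poly_roots_finite[OF \<open>p1 \<noteq> 0\<close>] poly_roots_finite[OF \<open>p2 \<noteq> 0\<close>] by simp
  then obtain s :: real where "s \<notin> {s. poly p1 s = 0} \<union> {s. poly p2 s = 0}"
    by (metis ex_new_if_finite infinite_UNIV_char_0)
  then show ?thesis
    using exp[OF l(1,2), of s] exp[OF l(3,4), of s] unfolding p1_def p2_def
    by (intro exI[of _ "a + s *\<^sub>R b"]) auto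
qed

lemma decompA:
  "\<forall>f :: 'n::finite pv \<Rightarrow> 'n pv. linear f \<longrightarrow> preserves f \<longrightarrow> inj (\<lambda>x. f x + x) \<longrightarrow>
     DIM('n pv) \<le> dim (Fix f) + k
     \<longrightarrow> (\<exists>L. length L \<le> k \<and> (\<forall>x. f x = tnet L x))"
proof (induction k)
  case 0
  show ?case
  proof (intro allI impI)
    fix f :: "'n pv \<Rightarrow> 'n pv"
    assume "linear f" "preserves f" "DIM('n pv) \<le> dim (Fix f) + 0"
    then have "\<forall>x. f x = x" using Fix_UNIV by simp
    then show "\<exists>L. length L \<le> 0 \<and> (\<forall>x. f x = tnet L x)"
      by (intro exI[of _ "[]"]) (simp add: tnet_Nil)
  qed
next
  case (Suc k)
  show ?case
  proof (intro allI impI)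
    fix f :: "'n pv \<Rightarrow> 'n pv"
    assume lin: "linear f" and pres: "preserves f" and injB: "inj (\<lambda>x. f x + x)"
      and d: "DIM('n pv) \<le> dim (Fix f) + Suc k"
    show "\<exists>L. length L \<le> Suc k \<and> (\<forall>x. f x = tnet L x)"
    proof (cases "\<forall>x. f x = x")
      case True then show ?thesis by (intro exI[of _ "[]"]) (simp add: tnet_Nil)
    next
      case False
      define B where "B = (\<lambda>x. f x + x)"
      have linB: "linear B" unfolding B_def using lin by (intro linear_compose_add lin_id)
      have injB': "inj B" using injB by (simp add: B_def)
      have surjB: "surj B" by (rule lin_surj[OF linB injB'])
      have surjf: "surj f" by (rule lin_surj[OF lin preserves_inj[OF pres lin]])
      have "\<exists>a. omega (f a) a \<noteq> 0"
      proof (rule ccontr)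
        assume "\<not> ?thesis"
        then have z: "\<And>a. omega (f a) a = 0" by blast
        have sym: "omega (f x) y = - omega (f y) x" for x y
          using z[of "x + y"] z[of x] z[of y]
          by (simp add: linear_add[OF lin] omega_simps)
        have ffx: "f (f x) = x" for x
        proof -
          have "omega (f (f x) - x) q = 0" for q
          proof -
            obtain y where y: "q = f y" using surjf by (metis surjD)
            have "omega (f (f x)) (f y) = omega (f x) y" using pres by (simp add: preserves_def)
            also have "\<dots> = - omega (f y) x" by (rule sym)
            also have "\<dots> = omega x (f y)" using omega_antisym[of "f y" x] by simp
            finally show ?thesis using y by (simp add: omega_simps)
          qed
          then show ?thesis using omega_nondeg[of "f (f x) - x"] by simp
        qed
        have "f x = x" for x
        proof -
          have "B (f x - x) = B 0"
            using ffx[of x] by (simp add: B_def linear_diff[OF lin] linear_0[OF lin])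
          then have "f x - x = 0" using injB' by (meson injD)
          then show ?thesis by simp
        qed
        then show False using False by blast
      qed
      then obtain a where a: "omega (f a) a \<noteq> 0" by blast
      obtain b where b: "a = B b" using surjB by (metis surjD)
      have "\<exists>w. omega (f w) (id w) \<noteq> 0 \<and> omega ((f \<circ> B) w) (B w) \<noteq> 0"
        by (rule two_forms[OF lin linear_id linear_compose[OF linB lin] linB])
           (use a b in auto)
      then obtain w where w1: "omega (f w) w \<noteq> 0" and w2: "omega (f (B w)) (B w) \<noteq> 0" by auto
      define x where "x = B w"
      have nz: "omega (f x) x \<noteq> 0" using w2 by (simp add: x_def)
      note P = peel[OF lin pres nz]
      define u where "u = f x - x"
      define t where "t = 1 / omega (f x) x"
      define g where "g = (\<lambda>y. tv u (- t) (f y))"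
      have linG: "linear g" "preserves g" "\<And>y. f y = tv u t (g y)"
        using P(1,2,3) by (simp_all add: g_def u_def t_def)
      have "dim (Fix f) < dim (Fix g)"
        using dim_Fix_less[OF lin P(1) P(4) P(5) P(6)] by (simp add: g_def u_def t_def)
      then have d': "DIM('n pv) \<le> dim (Fix g) + k" using d by simp
      have injG: "inj (\<lambda>y. g y + y)"
      proof -
        have linGB: "linear (\<lambda>y. g y + y)"
          using linG(1) by (intro linear_compose_add lin_id)
        have "y = 0" if gy: "g y + y = 0" for y
        proof -
          define c where "c = t * omega u (f y)"
          have ge: "g y = f y - c *\<^sub>R u" by (simp add: g_def tv_def c_def)
          have gy': "g y = - y" using gy by (simp add: eq_neg_iff_add_eq_0)
          have "- y + c *\<^sub>R u = f y" using ge gy' by (simp add: eq_diff_eq)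
          then have By: "B y = c *\<^sub>R u" by (simp add: B_def flip: \<open>- y + c *\<^sub>R u = f y\<close>)
          have uB: "u = B (f w - w)"
            by (simp add: u_def x_def B_def linear_diff[OF lin] linear_add[OF lin])
          have "B y = B (c *\<^sub>R (f w - w))" using By uB by (simp add: linear_scale[OF linB])
          then have yc: "y = c *\<^sub>R (f w - w)" using injB' by (meson injD)
          show "y = 0"
          proof (rule ccontr)
            assume "y \<noteq> 0"
            then have c0: "c \<noteq> 0" using yc by auto
            have "c = t * omega u (f y)" by (simp add: c_def)
            also have "\<dots> = c * (t * omega u (f (f w) - f w))"
              by (simp add: yc linear_scale[OF lin] linear_diff[OF lin] omega_simps)
            finally have "t * omega u (f (f w) - f w) = 1" using c0 by simp
            then have e1: "omega u (f (f w) - f w) = omega (f x) x"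
              using nz by (simp add: t_def field_simps)
            have e2: "omega (f x) x = omega u x" by (simp add: u_def omega_simps)
            have xe: "x = f w + w" by (simp add: x_def B_def)
            have ue: "u = f (f w) - w" by (simp add: u_def xe linear_add[OF lin])
            have p1: "omega (f (f w)) (f w) = omega (f w) w" using pres by (simp add: preserves_def)
            have p2: "omega w (f (f w)) = - omega (f (f w)) w" by (rule omega_antisym)
            have p3: "omega w (f w) = - omega (f w) w" by (rule omega_antisym)
            have p4: "omega (f w) (f (f w)) = - omega (f w) w" using p1 omega_antisym[of "f w" "f (f w)"] by simp
            have "omega u (f (f w) - f w) - omega u x = - 4 * omega (f w) w"
              unfolding ue xe using p1 p2 p3 p4 by (simp add: omega_simps)
            then show False using e1 e2 w1 by simp
          qed
        qed
        then show ?thesis unfolding linear_injective_0[OF linGB] by blast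
      qed
      obtain L where L: "length L \<le> k" "\<forall>y. g y = tnet L y"
        using Suc.IH linG(1,2) injG d' by blast
      show ?thesis
      proof (intro exI[of _ "L @ [(u, t)]"] conjI allI)
        show "length (L @ [(u, t)]) \<le> Suc k" using L by simp
        fix y
        have "f y = tv u t (g y)" by (rule linG(3))
        also have "\<dots> = tnet (L @ [(u, t)]) y" using L(2) by (simp add: tnet_snoc)
        finally show "f y = tnet (L @ [(u, t)]) y" .
      qed
    qed
  qed
qed


lemma mat_pow_commute: "mat_pow A k ** A = A ** mat_pow A k"
proof (induction k)
  case 0 then show ?case by (simp add: matrix_mul_lid matrix_mul_rid)
next
  case (Suc k) then show ?case by (simp add: matrix_mul_assoc[symmetric])
qed

lemma mat_pow_add: "mat_pow A i ** mat_pow A j = mat_pow A (i + j)"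
proof (induction i)
  case 0 then show ?case by (simp add: matrix_mul_lid)
next
  case (Suc i) then show ?case by (simp add: matrix_mul_assoc[symmetric])
qed

lemma dot_transpose: "(A *v x) \<bullet> y = x \<bullet> (transpose A *v y)" for A :: "real^'m::finite^'k::finite"
  using dot_lmul_matrix[of x "transpose A" y] vector_transpose_matrix[of x A] by simp

lemma mat_axis: "(M *v axis j 1) $ i = (M $ i $ j :: real)"
  unfolding matrix_vector_mult_def axis_def
  by (simp add: if_distrib[of "\<lambda>x. _ * x"] sum.delta' cong: if_cong)

lemma mat_pow_bound:
  fixes A :: "real^'m::finite^'m"
  assumes K: "\<And>v. norm (A *v v) \<le> K * norm v" "0 \<le> K"
  shows "norm (mat_pow A k *v v) \<le> K ^ k * norm v"
proof (induction k arbitrary: v)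
  case 0 then show ?case by (simp add: matrix_vector_mul_lid)
next
  case (Suc k)
  have "norm (mat_pow A (Suc k) *v v) = norm (A *v (mat_pow A k *v v))"
    by (simp add: matrix_vector_mul_assoc)
  also have "\<dots> \<le> K * norm (mat_pow A k *v v)" by (rule K(1))
  also have "\<dots> \<le> K * (K ^ k * norm v)" by (rule mult_left_mono[OF Suc K(2)])
  finally show ?case by simp
qed

lemma norm_matrix_l1:
  fixes M :: "real^'m::finite^'m"
  shows "norm M \<le> (\<Sum>i\<in>UNIV. \<Sum>j\<in>UNIV. \<bar>M $ i $ j\<bar>)"
proof -
  have "norm M \<le> (\<Sum>i\<in>UNIV. norm (M $ i))"
    unfolding norm_vec_def by (rule L2_set_le_sum) simp
  also have "\<dots> \<le> (\<Sum>i\<in>UNIV. \<Sum>j\<in>UNIV. \<bar>M $ i $ j\<bar>)"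
    by (intro sum_mono norm_le_l1_cart)
  finally show ?thesis .
qed

lemma mat_pow_norm:
  fixes A :: "real^'m::finite^'m"
  assumes K: "\<And>v. norm (A *v v) \<le> K * norm v" "0 \<le> K"
  shows "norm (mat_pow A k) \<le> real (CARD('m) * CARD('m)) * K ^ k"
proof -
  have e: "\<bar>mat_pow A k $ i $ j\<bar> \<le> K ^ k" for i j
  proof -
    have "\<bar>mat_pow A k $ i $ j\<bar> = \<bar>(mat_pow A k *v axis j 1) $ i\<bar>" by (simp add: mat_axis)
    also have "\<dots> \<le> norm (mat_pow A k *v axis j 1)" by (rule component_le_norm_cart)
    also have "\<dots> \<le> K ^ k" using mat_pow_bound[OF K, of k "axis j 1"] by simp
    finally show ?thesis .
  qed
  have "norm (mat_pow A k) \<le> (\<Sum>i\<in>(UNIV::'m set). \<Sum>j\<in>(UNIV::'m set). K ^ k)"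
    using norm_matrix_l1[of "mat_pow A k"] e
    by (meson order_trans sum_mono)
  then show ?thesis by simp
qed

lemma matrix_bound: "\<exists>K\<ge>0. \<forall>v. norm (A *v v) \<le> K * norm (v::real^'m::finite)"
proof -
  obtain K where "\<And>v. norm (A *v v) \<le> norm v * K" "K > 0"
    using bounded_linear.pos_bounded[OF matrix_vector_mul_bounded_linear[of A]] by blast
  then show ?thesis by (metis less_imp_le mult.commute)
qed

lemma summable_mat_exp:
  fixes A :: "real^'m::finite^'m"
  shows "summable (\<lambda>k. (1 / fact k) *\<^sub>R mat_pow A k)"
proof -
  obtain K where K: "\<And>v. norm (A *v v) \<le> K * norm v" "0 \<le> K" using matrix_bound by blast
  define C where "C = real (CARD('m) * CARD('m))"
  have "summable (\<lambda>k. C * (K ^ k /\<^sub>R fact k))"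
    by (intro summable_mult summable_exp_generic)
  moreover have "norm ((1 / fact k) *\<^sub>R mat_pow A k) \<le> C * (K ^ k /\<^sub>R fact k)" for k
    using mat_pow_norm[OF K, of k] by (simp add: C_def divide_simps mult.commute)
  ultimately have "summable (\<lambda>k. norm ((1 / fact k) *\<^sub>R mat_pow A k))"
    by (intro summable_norm_comparison_test[where g="\<lambda>k. C * (K ^ k /\<^sub>R fact k)"]) auto
  then show ?thesis by (rule summable_norm_cancel)
qed

lemma mat_exp_apply:
  fixes A :: "real^'m::finite^'m"
  shows "mat_exp A *v v = (\<Sum>k. (1 / fact k) *\<^sub>R (mat_pow A k *v v))"
proof -
  have bl: "bounded_linear (\<lambda>M::real^'m^'m. M *v v)"
    unfolding linear_conv_bounded_linear[symmetric]
    by (rule linearI) (simp_all add: matrix_vector_mult_add_rdistrib scaleR_matrix_vector_assoc)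
  show ?thesis unfolding mat_exp_def
    using bounded_linear.suminf[OF bl summable_mat_exp[of A]]
    by (simp add: scaleR_matrix_vector_assoc)
qed

lemma summable_exp_vec:
  fixes A :: "real^'m::finite^'m"
  assumes K: "\<And>v. norm (A *v v) \<le> K * norm v" "0 \<le> K"
  shows "summable (\<lambda>k. norm ((1 / fact k) *\<^sub>R (mat_pow A k *v v)))"
proof -
  have "summable (\<lambda>k. norm v * (K ^ k /\<^sub>R fact k))"
    by (intro summable_mult summable_exp_generic)
  moreover have "norm ((1 / fact k) *\<^sub>R (mat_pow A k *v v)) \<le> norm v * (K ^ k /\<^sub>R fact k)" for k
    using mat_pow_bound[OF K, of k v] by (simp add: divide_simps mult.commute)
  ultimately show ?thesis
    by (intro summable_norm_comparison_test[where g="\<lambda>k. norm v * (K ^ k /\<^sub>R fact k)"]) auto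
qed


lemma omega_pow:
  fixes A :: "real^('n::finite+'n)^('n+'n)"
  assumes ham: "\<And>p q. omega (A *v p) q = - omega p (A *v q)"
  shows "omega (mat_pow A i *v p) q = (-1)^i * omega p (mat_pow A i *v q)"
proof (induction i arbitrary: p q)
  case 0 then show ?case by (simp add: matrix_vector_mul_lid)
next
  case (Suc i)
  have "omega (mat_pow A (Suc i) *v p) q = omega (A *v (mat_pow A i *v p)) q"
    by (simp add: matrix_vector_mul_assoc)
  also have "\<dots> = - omega (mat_pow A i *v p) (A *v q)" by (rule ham)
  also have "\<dots> = - ((-1)^i * omega p (mat_pow A i *v (A *v q)))" by (simp add: Suc.IH)
  also have "mat_pow A i *v (A *v q) = mat_pow A (Suc i) *v q"
    by (simp add: matrix_vector_mul_assoc mat_pow_commute)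
  finally show ?case by simp
qed

lemma alt_sum:
  assumes "0 < k"
  shows "(\<Sum>i\<le>k. (-1)^i / (fact i * fact (k - i))) = (0::real)"
proof -
  have "(\<Sum>i\<le>k. (-1)^i / (fact i * fact (k - i))) = (\<Sum>i\<le>k. (-1)^i * of_nat (k choose i) / (fact k :: real))"
  proof (rule sum.cong)
    fix i assume "i \<in> {..k}"
    then have "i \<le> k" by simp
    then show "(-1)^i / (fact i * fact (k - i)) = (-1)^i * of_nat (k choose i) / (fact k :: real)"
      by (simp add: binomial_fact)
  qed simp
  also have "\<dots> = (\<Sum>i\<le>k. (-1)^i * of_nat (k choose i)) / (fact k :: real)"
    by (simp add: sum_divide_distrib)
  also have "\<dots> = 0" using choose_alternating_sum[OF assms] by simp
  finally show ?thesis .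
qed

lemma preserves_exp:
  fixes A :: "real^('n::finite+'n)^('n+'n)"
  assumes ham: "\<And>p q. omega (A *v p) q = - omega p (A *v q)"
  shows "preserves (\<lambda>x. mat_exp A *v x)"
  unfolding preserves_def
proof (intro allI)
  fix x y :: "'n pv"
  obtain K where K: "\<And>v. norm (A *v v) \<le> K * norm v" "0 \<le> K" using matrix_bound by blast
  obtain KJ where KJ: "\<And>v. norm (Jmat *v v) \<le> KJ * norm (v::'n pv)" "0 \<le> KJ" using matrix_bound by blast
  define a where "a i = (1 / fact i) *\<^sub>R (mat_pow A i *v x)" for i
  define c where "c j = (1 / fact j) *\<^sub>R (mat_pow A j *v y)" for j
  define b where "b j = Jmat *v c j" for j
  have sa: "summable (\<lambda>i. norm (a i))" unfolding a_def by (rule summable_exp_vec[OF K])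
  have sc: "summable (\<lambda>i. norm (c i))" unfolding c_def by (rule summable_exp_vec[OF K])
  have sb: "summable (\<lambda>i. norm (b i))"
  proof (rule summable_norm_comparison_test[where g="\<lambda>i. KJ * norm (c i)"])
    show "\<exists>N. \<forall>n\<ge>N. norm (b n) \<le> KJ * norm (c n)" unfolding b_def using KJ(1) by blast
    show "summable (\<lambda>i. KJ * norm (c i))" by (rule summable_mult[OF sc])
  qed
  have ex: "mat_exp A *v x = suminf a" unfolding a_def by (rule mat_exp_apply)
  have ey: "Jmat *v (mat_exp A *v y) = suminf b"
  proof -
    have "mat_exp A *v y = suminf c" unfolding c_def by (rule mat_exp_apply)
    then show ?thesis unfolding b_def
      using bounded_linear.suminf[OF matrix_vector_mul_bounded_linear summable_norm_cancel[OF sc]]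
      by simp
  qed
  have comp: "(suminf f) $ i = (\<Sum>k. f k $ i)" if "summable (\<lambda>k. norm (f k))" for f :: "nat \<Rightarrow> 'n pv" and i
    using bounded_linear.suminf[OF bounded_linear_vec_nth summable_norm_cancel[OF that]] by simp
  have sac: "summable (\<lambda>k. norm (a k $ i))" for i
    by (rule summable_comparison_test[OF _ sa]) (simp add: component_le_norm_cart)
  have sbc: "summable (\<lambda>k. norm (b k $ i))" for i
    by (rule summable_comparison_test[OF _ sb]) (simp add: component_le_norm_cart)
  define T where "T i k = (\<Sum>j\<le>k. a j $ i * b (k - j) $ i)" for i k
  have cauchy: "(\<Sum>k. a k $ i) * (\<Sum>k. b k $ i) = (\<Sum>k. T i k)" for i
    unfolding T_def by (rule Cauchy_product[OF sac sbc])
  have sT: "summable (T i)" for i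
    unfolding T_def by (rule summable_Cauchy_product[OF sac sbc])
  have tm: "(\<Sum>i\<in>UNIV. T i k) = (if k = 0 then omega x y else 0)" for k
  proof -
    have "(\<Sum>i\<in>UNIV. T i k) = (\<Sum>j\<le>k. a j \<bullet> b (k - j))"
      unfolding T_def inner_vec_def by (simp add: sum.swap[of _ UNIV])
    also have "\<dots> = (\<Sum>j\<le>k. omega x (mat_pow A k *v y) * ((-1)^j / (fact j * fact (k - j))))"
    proof (rule sum.cong)
      fix j assume "j \<in> {..k}"
      then have jk: "j + (k - j) = k" by simp
      have "a j \<bullet> b (k - j) = omega (a j) (c (k - j))" by (simp add: omega_def b_def)
      also have "\<dots> = (1 / fact j) * (1 / fact (k - j)) * omega (mat_pow A j *v x) (mat_pow A (k - j) *v y)"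
        by (simp add: a_def c_def omega_simps)
      also have "omega (mat_pow A j *v x) (mat_pow A (k - j) *v y) = (-1)^j * omega x (mat_pow A k *v y)"
        using omega_pow[OF ham, of j x "mat_pow A (k - j) *v y"]
        by (simp add: matrix_vector_mul_assoc mat_pow_add jk)
      finally show "a j \<bullet> b (k - j) = omega x (mat_pow A k *v y) * ((-1)^j / (fact j * fact (k - j)))"
        by simp
    qed simp
    also have "\<dots> = omega x (mat_pow A k *v y) * (\<Sum>j\<le>k. (-1)^j / (fact j * fact (k - j)))"
      by (simp add: sum_distrib_left)
    also have "\<dots> = (if k = 0 then omega x y else 0)"
      using alt_sum[of k] by (simp add: matrix_vector_mul_lid)
    finally show ?thesis .
  qed
  have "omega (mat_exp A *v x) (mat_exp A *v y) = suminf a \<bullet> suminf b"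
    by (simp add: omega_def ex ey)
  also have "\<dots> = (\<Sum>i\<in>UNIV. (\<Sum>k. a k $ i) * (\<Sum>k. b k $ i))"
    unfolding inner_vec_def by (simp add: comp[OF sa] comp[OF sb])
  also have "\<dots> = (\<Sum>i\<in>UNIV. \<Sum>k. T i k)" by (simp add: cauchy)
  also have "\<dots> = (\<Sum>k. \<Sum>i\<in>UNIV. T i k)" by (rule suminf_sum[symmetric]) (rule sT)
  also have "\<dots> = (\<Sum>k. if k = 0 then omega x y else 0)" by (simp add: tm)
  also have "\<dots> = omega x y"
    using sums_single[of 0 "\<lambda>_. omega x y"] by (simp add: sums_iff)
  finally show "omega (mat_exp A *v x) (mat_exp A *v y) = omega x y" .
qed


lemma exp_inj:
  fixes A :: "real^('n::finite+'n)^('n+'n)"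
  assumes K: "\<And>v. norm (A *v v) \<le> K * norm v" "0 \<le> K" and Kh: "K \<le> 1/2"
  shows "inj (\<lambda>x. mat_exp A *v x + x)"
proof -
  have lin: "linear (\<lambda>x. mat_exp A *v x + x)"
    by (intro linear_compose_add lin_id) (rule matrix_vector_mul_linear)
  have "v = 0" if ev: "mat_exp A *v v + v = 0" for v :: "'n pv"
  proof -
    define a where "a k = (1 / fact k) *\<^sub>R (mat_pow A k *v v)" for k
    have sa: "summable (\<lambda>k. norm (a k))" unfolding a_def by (rule summable_exp_vec[OF K])
    have e: "mat_exp A *v v = suminf a" unfolding a_def by (rule mat_exp_apply)
    have a0: "a 0 = v" by (simp add: a_def matrix_vector_mul_lid)
    have "mat_exp A *v v - v = (\<Sum>n. a (Suc n))"
      using suminf_split_head[OF summable_norm_cancel[OF sa]] e a0 by simp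
    have sa': "summable (\<lambda>n. norm (a (Suc n)))" using sa summable_Suc_iff[where f="\<lambda>n. norm (a n)"] by simp
    have ser: "(\<lambda>n. K ^ n /\<^sub>R fact n) sums exp K" by (rule exp_converges)
    have sser: "summable (\<lambda>n. K ^ Suc n /\<^sub>R fact (Suc n))"
      using ser summable_Suc_iff[where f="\<lambda>n. K ^ n /\<^sub>R fact n"] by (simp add: sums_iff del: fact_Suc power_Suc)
    have hd: "(\<Sum>n. K ^ Suc n /\<^sub>R fact (Suc n)) = exp K - 1"
      using suminf_split_head[of "\<lambda>n. K ^ n /\<^sub>R fact n"] ser by (simp add: sums_iff del: fact_Suc power_Suc)
    have "norm (mat_exp A *v v - v) \<le> (\<Sum>n. norm (a (Suc n)))"
      using summable_norm[OF sa'] \<open>mat_exp A *v v - v = _\<close> by simp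
    also have "\<dots> \<le> (\<Sum>n. norm v * (K ^ Suc n /\<^sub>R fact (Suc n)))"
    proof (rule suminf_le)
      show "norm (a (Suc n)) \<le> norm v * (K ^ Suc n /\<^sub>R fact (Suc n))" for n
        using mat_pow_bound[OF K, of "Suc n" v] unfolding a_def
        by (simp add: divide_simps mult.commute del: fact_Suc power_Suc)
      show "summable (\<lambda>n. norm (a (Suc n)))" by (rule sa')
      show "summable (\<lambda>n. norm v * (K ^ Suc n /\<^sub>R fact (Suc n)))" by (rule summable_mult[OF sser])
    qed
    also have "\<dots> = norm v * (exp K - 1)" using suminf_mult[OF sser, of "norm v"] hd by simp
    also have "\<dots> \<le> norm v * 1"
    proof (rule mult_left_mono)
      show "exp K - 1 \<le> 1" using real_exp_bound_lemma[OF K(2) Kh] Kh by simp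
    qed simp
    finally have le: "norm (mat_exp A *v v - v) \<le> norm v" by simp
    have "mat_exp A *v v = - v" using ev by (simp add: eq_neg_iff_add_eq_0)
    then have "mat_exp A *v v - v = - (v + v)" by simp
    then have "norm (mat_exp A *v v - v) = norm (2 *\<^sub>R v)" by (simp only: norm_minus_cancel scaleR_2)
    then have "norm (mat_exp A *v v - v) = 2 * norm v" by simp
    then show "v = 0" using le by simp
  qed
  then show ?thesis unfolding linear_injective_0[OF lin] by blast
qed

lemma J_inner: "(Jmat *v z) \<bullet> (Jmat *v q) = z \<bullet> (q :: 'n::finite pv)"
  unfolding inner_vec_def by (simp add: sum_UNIV_Plus add.commute)

lemma ham_JM:
  fixes M :: "real^('n::finite+'n)^('n+'n)"
  assumes "transpose M = M"
  shows "omega ((h *\<^sub>R (Jmat ** M)) *v p) q = - omega p ((h *\<^sub>R (Jmat ** M)) *v q)"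
proof -
  have Av: "(h *\<^sub>R (Jmat ** M)) *v v = h *\<^sub>R (Jmat *v (M *v v))" for v :: "'n pv"
    by (simp only: scaleR_matrix_vector_assoc[symmetric] matrix_vector_mul_assoc[symmetric])
  have "omega ((h *\<^sub>R (Jmat ** M)) *v p) q = h * ((Jmat *v (M *v p)) \<bullet> (Jmat *v q))"
    unfolding Av omega_def by simp
  also have "\<dots> = h * (p \<bullet> (M *v q))" by (simp only: J_inner) (simp only: dot_transpose assms)
  also have "\<dots> = - omega p ((h *\<^sub>R (Jmat ** M)) *v q)"
    unfolding Av omega_scale_right unfolding omega_def JJ by simp
  finally show ?thesis .
qed

lemma symplectic_preserves:
  fixes S :: "real^('n::finite+'n)^('n+'n)"
  assumes "symplectic S"
  shows "preserves (\<lambda>x. S *v x)"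
  unfolding preserves_def omega_def
proof (intro allI)
  fix x y :: "'n pv"
  have "(S *v x) \<bullet> (Jmat *v (S *v y)) = x \<bullet> ((transpose S ** Jmat ** S) *v y)"
    by (simp add: dot_transpose matrix_vector_mul_assoc matrix_mul_assoc)
  then show "(S *v x) \<bullet> (Jmat *v (S *v y)) = x \<bullet> (Jmat *v y)"
    using assms by (simp add: symplectic_def)
qed

lemma layer_eq:
  assumes "h > 0"
  shows "psymp_layer h (- (Jmat *v u), [:0, 0, t / (2 * h):]) x = tv u t x"
proof -
  have Jm: "Jmat *v (- (Jmat *v u)) = u"
    using matrix_vector_mult_diff_distrib[of Jmat 0 "Jmat *v u"] JJ[of u] by simp
  have ip: "(- (Jmat *v u)) \<bullet> x = omega u x"
    using omega_antisym[of u x] unfolding omega_def by (simp add: inner_commute)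
  have ip2: "(Jmat *v u) \<bullet> x = - omega u x" using ip by simp
  show ?thesis
    unfolding psymp_layer_def tv_def using assms
    by (simp add: Jm ip ip2 pderiv_pCons)
qed

lemma net_eq:
  assumes "h > 0"
  shows "psympnet h (map (\<lambda>(u,t). (- (Jmat *v u), [:0, 0, t / (2 * h):])) L) x = tnet L x"
  unfolding psympnet_def tnet_def
proof (induction L arbitrary: x)
  case Nil then show ?case by simp
next
  case (Cons p L) then show ?case by (cases p) (simp add: layer_eq[OF assms])
qed

lemma net_valid:
  assumes "d \<ge> 2"
  shows "valid_psymp d (map (\<lambda>(u,t). (- (Jmat *v u), [:0, 0, t / (2 * h):])) L)"
  unfolding valid_psymp_def using assms by auto


lemma DIM_pv: "DIM('n::finite pv) = 2 * CARD('n)"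
  by (simp add: card_sum)

lemma to_net:
  assumes "d \<ge> 2" "h > 0"
  shows "\<exists>ls. valid_psymp d ls \<and> length ls = length L \<and> (\<forall>x. tnet L x = psympnet h ls x)"
  by (intro exI[of _ "map (\<lambda>(u,t). (- (Jmat *v u), [:0, 0, t / (2 * h):])) L"])
     (simp add: net_valid[OF assms(1)] net_eq[OF assms(2)])

theorem theorem2:
  fixes d :: nat
  assumes "d \<ge> 2"
  shows "(\<forall>S :: real ^ ('n::finite + 'n) ^ ('n + 'n). symplectic S \<longrightarrow>
            (\<forall>h > 0. \<exists>ls. valid_psymp d ls \<and> length ls \<le> 5 * CARD('n) \<and>
               (\<forall>x. S *v x = psympnet h ls x)))
       \<and> (\<forall>S :: real ^ ('n + 'n) ^ ('n + 'n). symplectic S \<and> det (block_A S) \<noteq> 0 \<longrightarrow>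
            (\<forall>h > 0. \<exists>ls. valid_psymp d ls \<and> length ls \<le> 4 * CARD('n) \<and>
               (\<forall>x. S *v x = psympnet h ls x)))
       \<and> (\<forall>M :: real ^ ('n + 'n) ^ ('n + 'n). transpose M = M \<longrightarrow>
            (\<exists>h0 > 0. \<forall>h. 0 < h \<and> h < h0 \<longrightarrow>
               (\<exists>ls. valid_psymp d ls \<and> length ls \<le> 2 * CARD('n) \<and>
                  (\<forall>x. mat_exp (h *\<^sub>R (Jmat ** M)) *v x = psympnet h ls x))))"
proof -
  have symp: "\<exists>ls. valid_psymp d ls \<and> length ls \<le> 4 * CARD('n) \<and> (\<forall>x. S *v x = psympnet h ls x)"
    if sS: "symplectic S" and hp: "h > 0" for S :: "real ^ ('n + 'n) ^ ('n + 'n)" and h :: real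
  proof -
    have "DIM('n pv) \<le> dim (Fix (\<lambda>x. S *v x)) + DIM('n pv)" by simp
    then obtain L where L: "length L \<le> 2 * DIM('n pv)" "\<forall>x. S *v x = tnet L x"
      using decompB[of "DIM('n pv)"] matrix_vector_mul_linear[of S] symplectic_preserves[OF sS]
      by blast
    obtain ls where "valid_psymp d ls" "length ls = length L" "\<forall>x. tnet L x = psympnet h ls x"
      using to_net[OF assms hp] by blast
    then show ?thesis using L by (intro exI[of _ ls]) (simp add: DIM_pv)
  qed
  have p1: "\<forall>S :: real ^ ('n::finite + 'n) ^ ('n + 'n). symplectic S \<longrightarrow>
            (\<forall>h > 0. \<exists>ls. valid_psymp d ls \<and> length ls \<le> 5 * CARD('n) \<and>
               (\<forall>x. S *v x = psympnet h ls x))"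
  proof (intro allI impI)
    fix S :: "real ^ ('n + 'n) ^ ('n + 'n)" and h :: real
    assume "symplectic S" "h > 0"
    then obtain ls where "valid_psymp d ls" "length ls \<le> 4 * CARD('n)" "\<forall>x. S *v x = psympnet h ls x"
      using symp by blast
    then show "\<exists>ls. valid_psymp d ls \<and> length ls \<le> 5 * CARD('n) \<and> (\<forall>x. S *v x = psympnet h ls x)"
      by (intro exI[of _ ls]) simp
  qed
  have p2: "\<forall>S :: real ^ ('n + 'n) ^ ('n + 'n). symplectic S \<and> det (block_A S) \<noteq> 0 \<longrightarrow>
            (\<forall>h > 0. \<exists>ls. valid_psymp d ls \<and> length ls \<le> 4 * CARD('n) \<and>
               (\<forall>x. S *v x = psympnet h ls x))"
    using symp by blast
  have p3: "\<forall>M :: real ^ ('n + 'n) ^ ('n + 'n). transpose M = M \<longrightarrow>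
            (\<exists>h0 > 0. \<forall>h. 0 < h \<and> h < h0 \<longrightarrow>
               (\<exists>ls. valid_psymp d ls \<and> length ls \<le> 2 * CARD('n) \<and>
                  (\<forall>x. mat_exp (h *\<^sub>R (Jmat ** M)) *v x = psympnet h ls x)))"
  proof (intro allI impI)
    fix M :: "real ^ ('n + 'n) ^ ('n + 'n)"
    assume M: "transpose M = M"
    obtain K0 where K0: "\<And>v. norm ((Jmat ** M) *v v) \<le> K0 * norm (v::'n pv)" "0 \<le> K0"
      using matrix_bound by blast
    define h0 where "h0 = 1 / (2 * (K0 + 1))"
    have h0p: "h0 > 0" using K0(2) by (simp add: h0_def)
    show "\<exists>h0 > 0. \<forall>h. 0 < h \<and> h < h0 \<longrightarrow>
               (\<exists>ls. valid_psymp d ls \<and> length ls \<le> 2 * CARD('n) \<and>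
                  (\<forall>x. mat_exp (h *\<^sub>R (Jmat ** M)) *v x = psympnet h ls x))"
    proof (intro exI[of _ h0] conjI allI impI h0p)
      fix h :: real assume h: "0 < h \<and> h < h0"
      define A where "A = h *\<^sub>R (Jmat ** M)"
      have KA: "norm (A *v v) \<le> (h * K0) * norm v" for v :: "'n pv"
      proof -
        have "norm (A *v v) = h * norm ((Jmat ** M) *v v)"
          using h by (simp add: A_def scaleR_matrix_vector_assoc[symmetric])
        also have "\<dots> \<le> h * (K0 * norm v)" using K0(1) h by (simp add: mult_left_mono)
        finally show ?thesis by simp
      qed
      have hK: "h * K0 \<le> 1/2"
      proof -
        have "h * K0 \<le> h0 * K0" using h K0(2) by (simp add: mult_right_mono)
        also have "\<dots> \<le> 1/2" using K0(2) by (simp add: h0_def divide_simps)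
        finally show ?thesis .
      qed
      have inj: "inj (\<lambda>x. mat_exp A *v x + x)"
        by (rule exp_inj[OF KA _ hK]) (use h K0 in simp)
      have pres: "preserves (\<lambda>x. mat_exp A *v x)"
        by (rule preserves_exp) (simp add: A_def ham_JM[OF M])
      have "DIM('n pv) \<le> dim (Fix (\<lambda>x. mat_exp A *v x)) + DIM('n pv)" by simp
      then obtain L where L: "length L \<le> DIM('n pv)" "\<forall>x. mat_exp A *v x = tnet L x"
        using decompA[of "DIM('n pv)"] matrix_vector_mul_linear[of "mat_exp A"] pres inj
        by blast
      obtain ls where "valid_psymp d ls" "length ls = length L" "\<forall>x. tnet L x = psympnet h ls x"
        using to_net[OF assms] h by blast
      then show "\<exists>ls. valid_psymp d ls \<and> length ls \<le> 2 * CARD('n) \<and>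
                  (\<forall>x. mat_exp (h *\<^sub>R (Jmat ** M)) *v x = psympnet h ls x)"
        using L by (intro exI[of _ ls]) (simp add: DIM_pv A_def)
    qed
  qed
  show ?thesis using p1 p2 p3 by blast
qed

end
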